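(* Let $t \geq 1$ be an integer and let $\mathcal{F}$ be a non-empty finite $t$-symmetric family of finite sets. Then \[\beta(\mathcal{F},t) = \frac{l(\mathcal{F},t)}{|\mathcal{F}|}.\]
   Context: A family $\mathcal{F}$ is $t$-symmetric if there is a group $\Gamma$ of bijections $\mathcal{F} \to \mathcal{F}$ such that for any $A, B \in \mathcal{F}$: (a) there exists $\delta \in \Gamma$ with $B = \delta(A)$; (b) if $|A \cap B| \geq t$ then $|\gamma(A) \cap \gamma(B)| \geq t$ for all $\gamma \in \Gamma$. A family $\mathcal{A}$ is $t$-intersecting if $|A \cap B| \geq t$ for all $A, B \in \mathcal{A}$ with $A \neq B$; $l(\mathcal{F},t)$ is the size of a largest $t$-intersecting sub-family of $\mathcal{F}$. For a family $\mathcal{A}$, $\mathcal{A}^{t,+} = \{A \in \mathcal{A} : |A \cap B| \geq t \text{ for all } B \in \mathcal{A}\setminus\{A\}\}$ and $\mathcal{A}^{t,-} = \mathcal{A} \setminus \mathcal{A}^{t,+}$. For $\mathcal{A} \subseteq \mathcal{F}$, $\beta(\mathcal{F},t,\mathcal{A}) = \frac{l(\mathcal{F},t) - |\mathcal{A}^{t,+}|}{|\mathcal{A}^{t,-}|}$ if $\mathcal{A}^{t,-} \neq \emptyset$, and $\frac{l(\mathcal{F},t)}{|\mathcal{F}|}$ otherwise; $\beta(\mathcal{F},t) = \min_{\mathcal{A} \subseteq \mathcal{F}} \beta(\mathcal{F},t,\mathcal{A})$. *)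

theory Defs
  imports Complex_Main
begin

definition bij_group :: "'a set set \<Rightarrow> ('a set \<Rightarrow> 'a set) set \<Rightarrow> bool" where
  "bij_group F \<Gamma> \<longleftrightarrow>
     (\<forall>g\<in>\<Gamma>. bij_betw g F F) \<and>
     (\<exists>e\<in>\<Gamma>. \<forall>A\<in>F. e A = A) \<and>
     (\<forall>g\<in>\<Gamma>. \<forall>h\<in>\<Gamma>. \<exists>k\<in>\<Gamma>. \<forall>A\<in>F. k A = g (h A)) \<and>
     (\<forall>g\<in>\<Gamma>. \<exists>k\<in>\<Gamma>. \<forall>A\<in>F. k (g A) = A)"

definition t_symmetric :: "'a set set \<Rightarrow> nat \<Rightarrow> bool" where
  "t_symmetric F t \<longleftrightarrow> (\<exists>\<Gamma>. bij_group F \<Gamma> \<and>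
     (\<forall>A\<in>F. \<forall>B\<in>F. (\<exists>\<delta>\<in>\<Gamma>. B = \<delta> A)) \<and>
     (\<forall>A\<in>F. \<forall>B\<in>F. t \<le> card (A \<inter> B) \<longrightarrow>
        (\<forall>\<gamma>\<in>\<Gamma>. t \<le> card (\<gamma> A \<inter> \<gamma> B))))"

definition t_intersecting :: "nat \<Rightarrow> 'a set set \<Rightarrow> bool" where
  "t_intersecting t \<A> \<longleftrightarrow> (\<forall>A\<in>\<A>. \<forall>B\<in>\<A>. A \<noteq> B \<longrightarrow> t \<le> card (A \<inter> B))"

definition l_max :: "'a set set \<Rightarrow> nat \<Rightarrow> nat" where
  "l_max F t = Max {card \<A> | \<A>. \<A> \<subseteq> F \<and> t_intersecting t \<A>}"

definition plus_part :: "'a set set \<Rightarrow> nat \<Rightarrow> 'a set set" where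
  "plus_part \<A> t = {A \<in> \<A>. \<forall>B \<in> \<A> - {A}. t \<le> card (A \<inter> B)}"

definition minus_part :: "'a set set \<Rightarrow> nat \<Rightarrow> 'a set set" where
  "minus_part \<A> t = \<A> - plus_part \<A> t"

definition beta_fam :: "'a set set \<Rightarrow> nat \<Rightarrow> 'a set set \<Rightarrow> real" where
  "beta_fam F t \<A> =
     (if minus_part \<A> t \<noteq> {}
      then (real (l_max F t) - real (card (plus_part \<A> t))) / real (card (minus_part \<A> t))
      else real (l_max F t) / real (card F))"

definition beta :: "'a set set \<Rightarrow> nat \<Rightarrow> real" where
  "beta F t = Min (beta_fam F t ` Pow F)"

end

theory Submission
  imports Defs "HOL-Library.FuncSet"
begin

lemma card_ind: "finite A \<Longrightarrow> card {x\<in>A. P x} = (\<Sum>x\<in>A. if P x then 1 else 0::nat)"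
  by (simp add: sum.If_cases Int_def)

lemma lmax_ge:
  assumes "finite F" "B \<subseteq> F" "t_intersecting t B"
  shows "card B \<le> l_max F t"
proof -
  have fin: "finite {card \<A> | \<A>. \<A> \<subseteq> F \<and> t_intersecting t \<A>}"
    by (rule finite_subset[of _ "card ` Pow F"]) (use assms in auto)
  show ?thesis unfolding l_max_def by (rule Max_ge[OF fin]) (use assms in auto)
qed

lemma lmax_in:
  assumes "finite F"
  shows "\<exists>I. I \<subseteq> F \<and> t_intersecting t I \<and> card I = l_max F t"
proof -
  have fin: "finite {card \<A> | \<A>. \<A> \<subseteq> F \<and> t_intersecting t \<A>}"
    by (rule finite_subset[of _ "card ` Pow F"]) (use assms in auto)
  have ne: "{card \<A> | \<A>. \<A> \<subseteq> F \<and> t_intersecting t \<A>} \<noteq> {}"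
    using t_intersecting_def by fastforce
  from Max_in[OF fin ne] show ?thesis unfolding l_max_def by auto
qed

theorem corollary3p9:
  fixes F :: "'a set set" and t :: nat
  assumes "t \<ge> 1" and "finite F" and "F \<noteq> {}" and "\<forall>A\<in>F. finite A"
    and "t_symmetric F t"
  shows "beta F t = real (l_max F t) / real (card F)"
proof -
  define l where "l = l_max F t"
  define n where "n = card F"
  have npos: "n > 0" unfolding n_def using assms(2,3) by (simp add: card_gt_0_iff)
  obtain \<Gamma> where H: "bij_group F \<Gamma> \<and> (\<forall>A\<in>F. \<forall>B\<in>F. (\<exists>\<delta>\<in>\<Gamma>. B = \<delta> A)) \<and>
     (\<forall>A\<in>F. \<forall>B\<in>F. t \<le> card (A \<inter> B) \<longrightarrow> (\<forall>\<gamma>\<in>\<Gamma>. t \<le> card (\<gamma> A \<inter> \<gamma> B)))"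
    using assms(5) unfolding t_symmetric_def by (rule exE)
  have bg: "bij_group F \<Gamma>" using H by (rule conjunct1)
  have tr: "\<forall>A\<in>F. \<forall>B\<in>F. (\<exists>\<delta>\<in>\<Gamma>. B = \<delta> A)" using H by (elim conjE) assumption
  have pres: "\<forall>A\<in>F. \<forall>B\<in>F. t \<le> card (A \<inter> B) \<longrightarrow> (\<forall>\<gamma>\<in>\<Gamma>. t \<le> card (\<gamma> A \<inter> \<gamma> B))"
    using H by (elim conjE) assumption
  note bgu = bg[unfolded bij_group_def]
  have bij: "\<And>g. g \<in> \<Gamma> \<Longrightarrow> bij_betw g F F" using bgu by simp
  have comp: "\<And>g h. g \<in> \<Gamma> \<Longrightarrow> h \<in> \<Gamma> \<Longrightarrow> \<exists>k\<in>\<Gamma>. \<forall>A\<in>F. k A = g (h A)"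
    using bgu by simp
  have Gne: "\<Gamma> \<noteq> {}" using bgu by auto
  define G where "G = (\<lambda>\<gamma>. restrict \<gamma> F) ` \<Gamma>"
  have GPi: "G \<subseteq> Pi\<^sub>E F (\<lambda>_. F)"
    unfolding G_def using bij bij_betw_apply by fastforce
  have finG: "finite G"
    by (rule finite_subset[OF GPi]) (rule finite_PiE, use assms(2) in auto)
  have Gne': "G \<noteq> {}" using Gne G_def by auto
  have Gmap: "\<And>g x. g \<in> G \<Longrightarrow> x \<in> F \<Longrightarrow> g x \<in> F" using GPi by auto
  define c where "c a b = card {g\<in>G. g a = b}" for a b
  have cle: "c a b \<le> c a b'" if "a \<in> F" "b \<in> F" "b' \<in> F" for a b b'
  proof -
    have "\<exists>\<delta>\<in>\<Gamma>. b' = \<delta> b" using tr that(2,3) by simp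
    then obtain \<delta> where d: "\<delta> \<in> \<Gamma>" "b' = \<delta> b" by (rule bexE)
    have dinj: "inj_on \<delta> F" using bij[OF d(1)] by (simp add: bij_betw_def)
    define \<phi> where "\<phi> g = restrict (\<delta> \<circ> g) F" for g :: "'a set \<Rightarrow> 'a set"
    have "card {g\<in>G. g a = b} \<le> card {g\<in>G. g a = b'}"
    proof (rule card_inj_on_le[where f=\<phi>])
      show "inj_on \<phi> {g \<in> G. g a = b}"
      proof (rule inj_onI)
        fix g g' assume g: "g \<in> {g \<in> G. g a = b}" and g': "g' \<in> {g \<in> G. g a = b}" and e: "\<phi> g = \<phi> g'"
        show "g = g'"
        proof (rule PiE_ext)
          show "g \<in> Pi\<^sub>E F (\<lambda>_. F)" "g' \<in> Pi\<^sub>E F (\<lambda>_. F)" using g g' GPi by auto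
          fix x assume x: "x \<in> F"
          have eq: "\<delta> (g x) = \<delta> (g' x)" using fun_cong[OF e, of x] x by (simp add: \<phi>_def)
          have gx: "g x \<in> F" "g' x \<in> F" using g g' x Gmap by auto
          show "g x = g' x" using inj_onD[OF dinj eq gx] .
        qed
      qed
      show "\<phi> ` {g \<in> G. g a = b} \<subseteq> {g \<in> G. g a = b'}"
      proof
        fix h assume "h \<in> \<phi> ` {g \<in> G. g a = b}"
        then obtain g where g: "g \<in> G" "g a = b" "h = \<phi> g" by auto
        obtain \<gamma> where ga: "\<gamma> \<in> \<Gamma>" "g = restrict \<gamma> F" using g G_def by auto
        obtain k where k: "k \<in> \<Gamma>" "\<forall>A\<in>F. k A = \<delta> (\<gamma> A)" using comp[OF d(1) ga(1)] by blast
        have "h = restrict k F" using k ga g(3) by (auto simp: \<phi>_def restrict_def fun_eq_iff)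
        then have "h \<in> G" using k G_def by auto
        moreover have "h a = b'" using g that d by (simp add: \<phi>_def)
        ultimately show "h \<in> {g \<in> G. g a = b'}" by auto
      qed
      show "finite {g \<in> G. g a = b'}" using finG by auto
    qed
    then show ?thesis by (simp add: c_def)
  qed
  have ceq: "c a b = c a a" if "a \<in> F" "b \<in> F" for a b
    using cle[of a b a] cle[of a a b] that by auto
  have csum: "(\<Sum>b\<in>F. c a b) = card G" if a: "a \<in> F" for a
  proof -
    have "(\<Sum>b\<in>F. c a b) = (\<Sum>b\<in>F. \<Sum>g\<in>G. if g a = b then 1 else 0)"
      by (simp add: c_def card_ind[OF finG])
    also have "\<dots> = (\<Sum>g\<in>G. \<Sum>b\<in>F. if g a = b then 1 else 0)" by (rule sum.swap)
    also have "\<dots> = (\<Sum>g\<in>G. 1)"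
      by (rule sum.cong) (use Gmap a assms(2) in \<open>auto simp: sum.delta\<close>)
    finally show ?thesis by simp
  qed
  have nc: "n * c a b = card G" if "a \<in> F" "b \<in> F" for a b
  proof -
    have "(\<Sum>b\<in>F. c a b) = (\<Sum>b\<in>F. c a a)"
    proof (rule sum.cong[OF refl])
      fix b' assume "b' \<in> F"
      then show "c a b' = c a a" by (rule ceq[OF that(1)])
    qed
    then show ?thesis using csum[OF that(1)] ceq[OF that] by (simp add: n_def)
  qed
  obtain I where I: "I \<subseteq> F" "t_intersecting t I" "card I = l"
    using lmax_in[OF assms(2), of t] unfolding l_def by blast
  have finI: "finite I" using I(1) assms(2) finite_subset by blast
  have key: "real l * real (card (minus_part A t)) / real n + real (card (plus_part A t)) \<le> real l"
    if A: "A \<subseteq> F" for A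
  proof -
    define P where "P = plus_part A t"
    define M where "M = minus_part A t"
    have PM: "P \<subseteq> A" "M \<subseteq> A" "P \<inter> M = {}" unfolding P_def M_def plus_part_def minus_part_def by auto
    have MF: "M \<subseteq> F" using PM A by auto
    then have finM: "finite M" using assms(2) by (rule finite_subset)
    have sumeq: "n * (\<Sum>g\<in>G. card (g ` I \<inter> M)) = l * card M * card G"
    proof -
      have "(\<Sum>g\<in>G. card (g ` I \<inter> M)) = (\<Sum>g\<in>G. \<Sum>a\<in>I. \<Sum>b\<in>M. if g a = b then 1 else 0)"
      proof (rule sum.cong[OF refl])
        fix g assume g: "g \<in> G"
        have inj: "inj_on g I"
        proof -
          obtain \<gamma> where "\<gamma> \<in> \<Gamma>" "g = restrict \<gamma> F" using g G_def by auto
          then show ?thesis using bij[of \<gamma>] I(1) unfolding bij_betw_def inj_on_def by auto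
        qed
        have "g ` I \<inter> M = g ` {a\<in>I. g a \<in> M}" by auto
        moreover have "card (g ` {a\<in>I. g a \<in> M}) = card {a\<in>I. g a \<in> M}"
          by (rule card_image) (rule inj_on_subset[OF inj], auto)
        ultimately have "card (g ` I \<inter> M) = card {a\<in>I. g a \<in> M}" by simp
        also have "\<dots> = (\<Sum>a\<in>I. if g a \<in> M then 1 else 0)" by (rule card_ind[OF finI])
        also have "\<dots> = (\<Sum>a\<in>I. \<Sum>b\<in>M. if g a = b then 1 else 0)"
          by (rule sum.cong[OF refl]) (use finM in \<open>simp add: sum.delta\<close>)
        finally show "card (g ` I \<inter> M) = (\<Sum>a\<in>I. \<Sum>b\<in>M. if g a = b then 1 else 0)" .
      qed
      also have "\<dots> = (\<Sum>a\<in>I. \<Sum>g\<in>G. \<Sum>b\<in>M. if g a = b then 1 else 0)" by (rule sum.swap)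
      also have "\<dots> = (\<Sum>a\<in>I. \<Sum>b\<in>M. \<Sum>g\<in>G. if g a = b then 1 else 0)"
        by (rule sum.cong[OF refl]) (rule sum.swap)
      also have "\<dots> = (\<Sum>a\<in>I. \<Sum>b\<in>M. c a b)"
        by (simp add: c_def card_ind[OF finG])
      finally have "n * (\<Sum>g\<in>G. card (g ` I \<inter> M)) = (\<Sum>a\<in>I. \<Sum>b\<in>M. n * c a b)"
        by (simp add: sum_distrib_left)
      also have "\<dots> = (\<Sum>a\<in>I. \<Sum>b\<in>M. card G)"
      proof (rule sum.cong[OF refl], rule sum.cong[OF refl])
        fix a b assume "a \<in> I" "b \<in> M"
        then show "n * c a b = card G" by (intro nc) (use I(1) MF in auto)
      qed
      finally show ?thesis using I(3) by simp
    qed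
    have "\<exists>g\<in>G. l * card M \<le> n * card (g ` I \<inter> M)"
    proof (rule ccontr)
      assume "\<not> ?thesis"
      then have lt: "\<And>g. g \<in> G \<Longrightarrow> n * card (g ` I \<inter> M) < l * card M" by auto
      have "(\<Sum>g\<in>G. n * card (g ` I \<inter> M)) < (\<Sum>g\<in>G. l * card M)"
        by (rule sum_strict_mono[OF finG Gne' lt])
      moreover have "(\<Sum>g\<in>G. n * card (g ` I \<inter> M)) = n * (\<Sum>g\<in>G. card (g ` I \<inter> M))"
        by (simp add: sum_distrib_left)
      moreover have "(\<Sum>g\<in>G. l * card M) = l * card M * card G" by simp
      ultimately show False using sumeq by linarith
    qed
    then obtain g where g: "g \<in> G" "l * card M \<le> n * card (g ` I \<inter> M)" by blast
    obtain \<gamma> where ga: "\<gamma> \<in> \<Gamma>" "g = restrict \<gamma> F" using g G_def by auto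
    have gI: "g ` I = \<gamma> ` I" using ga I(1) by auto
    have tgi: "t_intersecting t (g ` I)"
      unfolding t_intersecting_def gI
    proof (intro ballI impI)
      fix X Y assume "X \<in> \<gamma> ` I" "Y \<in> \<gamma> ` I" "X \<noteq> Y"
      then obtain x y where xy: "x \<in> I" "y \<in> I" "X = \<gamma> x" "Y = \<gamma> y" "x \<noteq> y" by auto
      have xyF: "x \<in> F" "y \<in> F" using xy I(1) by auto
      have "t \<le> card (x \<inter> y)" using I(2) xy unfolding t_intersecting_def by auto
      from pres[rule_format, OF xyF this ga(1)] show "t \<le> card (X \<inter> Y)" using xy by simp
    qed
    define J where "J = P \<union> (g ` I \<inter> M)"
    have tJ: "t_intersecting t J"
      unfolding t_intersecting_def
    proof (intro ballI impI)
      fix X Y assume X: "X \<in> J" and Y: "Y \<in> J" and ne: "X \<noteq> Y"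
      show "t \<le> card (X \<inter> Y)"
      proof (cases "X \<in> P")
        case True
        then have "Y \<in> A" using Y PM J_def by auto
        then show ?thesis using True ne unfolding P_def plus_part_def by auto
      next
        case False
        then have X': "X \<in> g ` I" "X \<in> A" using X J_def PM by auto
        show ?thesis
        proof (cases "Y \<in> P")
          case True
          then have "t \<le> card (Y \<inter> X)" using X' ne unfolding P_def plus_part_def by auto
          then show ?thesis by (simp add: Int_commute)
        next
          case False
          then have "Y \<in> g ` I" using Y J_def by auto
          then show ?thesis using tgi X' ne unfolding t_intersecting_def by blast
        qed
      qed
    qed
    have JF: "J \<subseteq> F" using J_def PM A by auto
    have "P \<subseteq> F" using PM A by auto
    then have finP: "finite P" using assms(2) by (rule finite_subset)
    have "card J = card P + card (g ` I \<inter> M)"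
      unfolding J_def by (rule card_Un_disjoint) (use finP finM PM in auto)
    with lmax_ge[OF assms(2) JF tJ] have le: "card P + card (g ` I \<inter> M) \<le> l" by (simp add: l_def)
    have "real (l * card M) \<le> real (n * card (g ` I \<inter> M))" using g(2) by (simp only: of_nat_le_iff)
    then have r: "real l * real (card M) \<le> real (card (g ` I \<inter> M)) * real n" by (simp add: mult.commute)
    have "real n > 0" using npos by simp
    then have "real l * real (card M) / real n \<le> real (card (g ` I \<inter> M))"
      using r by (simp add: pos_divide_le_eq)
    then show ?thesis using le unfolding P_def[symmetric] M_def[symmetric] by linarith
  qed
  have ge: "real l / real n \<le> beta_fam F t A" if "A \<subseteq> F" for A
  proof (cases "minus_part A t \<noteq> {}")
    case True
    have "minus_part A t \<subseteq> F" using that unfolding minus_part_def by auto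
    then have finM: "finite (minus_part A t)" using assms(2) by (rule finite_subset)
    have mpos: "real (card (minus_part A t)) > 0" using True finM by (simp add: card_gt_0_iff)
    have "real l * real (card (minus_part A t)) / real n \<le> real l - real (card (plus_part A t))"
      using key[OF that] by linarith
    then have "real l / real n * real (card (minus_part A t)) \<le> real l - real (card (plus_part A t))"
      by simp
    then have "real l / real n \<le> (real l - real (card (plus_part A t))) / real (card (minus_part A t))"
      using mpos by (simp add: pos_le_divide_eq)
    then show ?thesis using True by (simp add: beta_fam_def l_def)
  next
    case False
    then show ?thesis by (simp add: beta_fam_def l_def n_def)
  qed
  have e: "beta_fam F t {} = real l / real n"
    by (simp add: beta_fam_def minus_part_def plus_part_def l_def n_def)
  have finB: "finite (beta_fam F t ` Pow F)" using assms(2) by simp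
  have "beta F t = real l / real n"
    unfolding beta_def
  proof (rule antisym)
    show "Min (beta_fam F t ` Pow F) \<le> real l / real n"
    proof -
      have "beta_fam F t {} \<in> beta_fam F t ` Pow F" by blast
      from Min_le[OF finB this] show ?thesis using e by simp
    qed
    show "real l / real n \<le> Min (beta_fam F t ` Pow F)"
      using finB ge by (subst Min_ge_iff) auto
  qed
  then show ?thesis by (simp add: l_def n_def)
qed

end
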